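(* Let $\theta\in[0,\frac\pi2]$ and let $\Omega_\theta\subset\mathbb{R}^2$ be a simply connected open set on which $\cos\theta\cosh u+\sin\theta\cos v\neq0$ (e.g. $\Omega_\theta=\mathbb{R}^2$ for $\theta\in[0,\frac\pi4)$). Define on $\Omega_\theta$, with $z=u+iv$, $$h(z)=e^{iz},\quad \mathcal{M}_\theta=\cos\theta\,\sinh u\sin u-\sin\theta\,\cos u\cos v,\quad \mathcal{N}_\theta=e^{v}\left(\cos\theta\cosh u+\sin\theta\sin v\right).$$ Then: (i) $(h,\mathcal{M}_\theta,\mathcal{N}_\theta)$ is a Weierstrass data of the second kind on $\Omega_\theta$; (ii) the map $\mathbf{X}_\theta:=\cos\theta\,\mathbf{X}_0+\sin\theta\,\mathbf{X}_{\pi/2}$, where $$\mathbf{X}_0(u,v)=(\sinh u\sin u,\ \sinh u\cos u,\ \cosh u\sinh v,\ \cosh u\cosh v)^T,\quad \mathbf{X}_{\pi/2}(u,v)=(-\cos u\cos v,\ \sin u\cos v,\ \cosh v\sin v,\ \sinh v\sin v)^T,$$ satisfies $(\mathbf{X}_\theta)_z=(\mathcal{M}_\theta)_z(1,-i,-h,h)^T+(\mathcal{N}_\theta)_z\big(0,ih,\tfrac12(1+h^2),\tfrac12(1-h^2)\big)^T$, and is a conformal spacelike immersion of $\Omega_\theta$ into $\mathbb{L}^4$ with induced metric $(\cos\theta\cosh u+\sin\theta\cos v)^2(du^2+dv^2)$; (iii) the mean curvature vector of $\mathbf{X}_\theta$ is null and vanishes nowhere on $\Omega_\theta$; (iv)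 $\mathbf{X}_\theta(\Omega_\theta)$ lies in the hypersurface $x_1^2+x_2^2+x_3^2-x_4^2=-\cos(2\theta)$.
   Context: $z=u+iv$, $\partial_z=\frac12(\partial_u-i\partial_v)$, $\partial_{\overline z}=\frac12(\partial_u+i\partial_v)$. $\mathbb{L}^4$ is $\mathbb{R}^4$ with the Lorentzian metric $\langle x,y\rangle=x_1y_1+x_2y_2+x_3y_3-x_4y_4$. For a conformal spacelike immersion $\mathbf{X}$ with induced metric $\Lambda(du^2+dv^2)$, the mean curvature vector is $\mathbf{H}=\frac{1}{\Lambda}(\mathbf{X}_{uu}+\mathbf{X}_{vv})$. A Weierstrass data of the second kind on $\Omega$ is a triple $(h,\mathcal{M},\mathcal{N})$ where $h:\Omega\to\mathbb{C}\setminus\{0\}$ and $\mathcal{M},\mathcal{N}:\Omega\to\mathbb{R}$ are $\mathcal{C}^2$, satisfying $h_{\overline z}=0$, $\mathcal{M}_{z\overline z}=(\mathrm{Re}\,h)\,\mathcal{N}_{z\overline z}$, and $\mathcal{M}_z-(\mathrm{Re}\,h)\,\mathcal{N}_z\neq0$ at every point of $\Omega$. *)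

theory Defs
  imports "HOL-Analysis.Analysis"
begin

text \<open>Points of the domain are written as complex numbers z = u + i v, u = Re z, v = Im z.\<close>

definition pu :: "(complex \<Rightarrow> 'a::real_normed_vector) \<Rightarrow> complex \<Rightarrow> 'a" where
  "pu f z = vector_derivative (\<lambda>t::real. f (z + of_real t)) (at 0)"

definition pv :: "(complex \<Rightarrow> 'a::real_normed_vector) \<Rightarrow> complex \<Rightarrow> 'a" where
  "pv f z = vector_derivative (\<lambda>t::real. f (z + \<i> * of_real t)) (at 0)"

definition C1_on :: "complex set \<Rightarrow> (complex \<Rightarrow> 'a::real_normed_vector) \<Rightarrow> bool" where
  "C1_on S f \<longleftrightarrow>
     (\<forall>z\<in>S. (\<lambda>t::real. f (z + of_real t)) differentiable (at 0)
          \<and> (\<lambda>t::real. f (z + \<i> * of_real t)) differentiable (at 0))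
     \<and> continuous_on S f \<and> continuous_on S (pu f) \<and> continuous_on S (pv f)"

definition C2_on :: "complex set \<Rightarrow> (complex \<Rightarrow> 'a::real_normed_vector) \<Rightarrow> bool" where
  "C2_on S f \<longleftrightarrow> C1_on S f \<and> C1_on S (pu f) \<and> C1_on S (pv f)"

definition dz :: "(complex \<Rightarrow> complex) \<Rightarrow> complex \<Rightarrow> complex" where
  "dz f z = (pu f z - \<i> * pv f z) / 2"

definition dzb :: "(complex \<Rightarrow> complex) \<Rightarrow> complex \<Rightarrow> complex" where
  "dzb f z = (pu f z + \<i> * pv f z) / 2"

definition weierstrass_data2 ::
  "complex set \<Rightarrow> (complex \<Rightarrow> complex) \<Rightarrow> (complex \<Rightarrow> real) \<Rightarrow> (complex \<Rightarrow> real) \<Rightarrow> bool" where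
  "weierstrass_data2 \<Omega> h M N \<longleftrightarrow>
     (\<forall>z\<in>\<Omega>. h z \<noteq> 0) \<and> C2_on \<Omega> h \<and> C2_on \<Omega> M \<and> C2_on \<Omega> N
     \<and> (\<forall>z\<in>\<Omega>. dzb h z = 0)
     \<and> (\<forall>z\<in>\<Omega>. dz (dzb (\<lambda>w. complex_of_real (M w))) z
               = complex_of_real (Re (h z)) * dz (dzb (\<lambda>w. complex_of_real (N w))) z)
     \<and> (\<forall>z\<in>\<Omega>. dz (\<lambda>w. complex_of_real (M w)) z
               - complex_of_real (Re (h z)) * dz (\<lambda>w. complex_of_real (N w)) z \<noteq> 0)"

text \<open>Vectors of R^4 / C^4; the four coordinates x1,x2,x3,x4 are the indices 1,2,3,4 of type 4
  (4 = 0 in the numeral type, which is the fourth distinct index).\<close>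
definition vec4 :: "'a \<Rightarrow> 'a \<Rightarrow> 'a \<Rightarrow> 'a \<Rightarrow> 'a ^ 4" where
  "vec4 a b c d = (\<chi> i. if i = 1 then a else if i = 2 then b else if i = 3 then c else d)"

definition lorentz :: "real ^ 4 \<Rightarrow> real ^ 4 \<Rightarrow> real" where
  "lorentz x y = x$1 * y$1 + x$2 * y$2 + x$3 * y$3 - x$4 * y$4"

definition dz_vec :: "(complex \<Rightarrow> real ^ 4) \<Rightarrow> complex \<Rightarrow> complex ^ 4" where
  "dz_vec X z = (\<chi> k. dz (\<lambda>w. complex_of_real (X w $ k)) z)"

definition conformal_spacelike_immersion ::
  "complex set \<Rightarrow> (complex \<Rightarrow> real ^ 4) \<Rightarrow> (complex \<Rightarrow> real) \<Rightarrow> bool" where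
  "conformal_spacelike_immersion \<Omega> X \<Lambda> \<longleftrightarrow>
     (\<forall>z\<in>\<Omega>. X differentiable (at z)) \<and> C2_on \<Omega> X
     \<and> (\<forall>z\<in>\<Omega>. \<Lambda> z > 0
          \<and> lorentz (pu X z) (pu X z) = \<Lambda> z
          \<and> lorentz (pv X z) (pv X z) = \<Lambda> z
          \<and> lorentz (pu X z) (pv X z) = 0)"

definition mean_curvature :: "(complex \<Rightarrow> real ^ 4) \<Rightarrow> (complex \<Rightarrow> real) \<Rightarrow> complex \<Rightarrow> real ^ 4" where
  "mean_curvature X \<Lambda> z = (1 / \<Lambda> z) *\<^sub>R (pu (pu X) z + pv (pv X) z)"

definition hfun :: "complex \<Rightarrow> complex" where
  "hfun z = exp (\<i> * z)"

definition Mth :: "real \<Rightarrow> complex \<Rightarrow> real" where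
  "Mth \<theta> z = cos \<theta> * sinh (Re z) * sin (Re z) - sin \<theta> * cos (Re z) * cos (Im z)"

definition Nth :: "real \<Rightarrow> complex \<Rightarrow> real" where
  "Nth \<theta> z = exp (Im z) * (cos \<theta> * cosh (Re z) + sin \<theta> * sin (Im z))"

definition X0 :: "complex \<Rightarrow> real ^ 4" where
  "X0 z = vec4 (sinh (Re z) * sin (Re z)) (sinh (Re z) * cos (Re z))
               (cosh (Re z) * sinh (Im z)) (cosh (Re z) * cosh (Im z))"

definition Xpi2 :: "complex \<Rightarrow> real ^ 4" where
  "Xpi2 z = vec4 (- cos (Re z) * cos (Im z)) (sin (Re z) * cos (Im z))
                 (cosh (Im z) * sin (Im z)) (sinh (Im z) * sin (Im z))"

definition Xth :: "real \<Rightarrow> complex \<Rightarrow> real ^ 4" where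
  "Xth \<theta> z = cos \<theta> *\<^sub>R X0 z + sin \<theta> *\<^sub>R Xpi2 z"

definition Lam :: "real \<Rightarrow> complex \<Rightarrow> real" where
  "Lam \<theta> z = (cos \<theta> * cosh (Re z) + sin \<theta> * cos (Im z))\<^sup>2"

end

theory Submission
  imports Defs
begin


definition pd :: "(complex \<Rightarrow> 'a::real_normed_vector) \<Rightarrow> (complex \<Rightarrow> 'a) \<Rightarrow> (complex \<Rightarrow> 'a) \<Rightarrow> bool" where
  "pd f fu fv \<longleftrightarrow> (\<forall>z. (f has_derivative (\<lambda>w. Re w *\<^sub>R fu z + Im w *\<^sub>R fv z)) (at z))"

lemma pd_line_u:
  assumes "pd f fu fv"
  shows "((\<lambda>t::real. f (z + of_real t)) has_vector_derivative fu z) (at 0)"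
proof -
  have 1: "((\<lambda>t::real. z + of_real t) has_derivative (\<lambda>t. of_real t)) (at 0)"
    by (auto intro!: derivative_eq_intros)
  have 2: "(f has_derivative (\<lambda>w. Re w *\<^sub>R fu z + Im w *\<^sub>R fv z)) (at (z + of_real 0))"
    using assms unfolding pd_def by simp
  from has_derivative_compose[OF 1 2] show ?thesis
    unfolding has_vector_derivative_def by (simp add: o_def)
qed

lemma pd_line_v:
  assumes "pd f fu fv"
  shows "((\<lambda>t::real. f (z + \<i> * of_real t)) has_vector_derivative fv z) (at 0)"
proof -
  have 1: "((\<lambda>t::real. z + \<i> * of_real t) has_derivative (\<lambda>t. \<i> * of_real t)) (at 0)"
    by (auto intro!: derivative_eq_intros)
  have 2: "(f has_derivative (\<lambda>w. Re w *\<^sub>R fu z + Im w *\<^sub>R fv z)) (at (z + \<i> * of_real 0))"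
    using assms unfolding pd_def by simp
  from has_derivative_compose[OF 1 2] show ?thesis
    unfolding has_vector_derivative_def by (simp add: o_def)
qed

lemma pu_pd: "pd f fu fv \<Longrightarrow> pu f = fu"
  unfolding pu_def by (rule ext, rule vector_derivative_at, erule pd_line_u)

lemma pv_pd: "pd f fu fv \<Longrightarrow> pv f = fv"
  unfolding pv_def by (rule ext, rule vector_derivative_at, erule pd_line_v)

lemma pd_cont: "pd f fu fv \<Longrightarrow> continuous_on S f"
  unfolding pd_def
  by (meson continuous_at_imp_continuous_on has_derivative_continuous)

lemma pd_diff: "pd f fu fv \<Longrightarrow> f differentiable (at z)"
  unfolding pd_def differentiable_def by blast

lemma C1_pd:
  assumes "pd f fu fv" "continuous_on UNIV fu" "continuous_on UNIV fv"
  shows "C1_on S f"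
  unfolding C1_on_def pu_pd[OF assms(1)] pv_pd[OF assms(1)]
  using pd_line_u[OF assms(1)] pd_line_v[OF assms(1)] pd_cont[OF assms(1)]
    continuous_on_subset[OF assms(2)] continuous_on_subset[OF assms(3)]
  by (auto simp: differentiable_def has_vector_derivative_def)

lemma C2_pd:
  assumes "pd f fu fv" "pd fu fuu fuv" "pd fv fvu fvv"
   "continuous_on UNIV fuu" "continuous_on UNIV fuv" "continuous_on UNIV fvu" "continuous_on UNIV fvv"
  shows "C2_on S f"
  unfolding C2_on_def pu_pd[OF assms(1)] pv_pd[OF assms(1)]
  using assms by (meson C1_pd pd_cont)

lemma pd_add: "pd f fu fv \<Longrightarrow> pd g gu gv \<Longrightarrow> pd (\<lambda>z. f z + g z) (\<lambda>z. fu z + gu z) (\<lambda>z. fv z + gv z)"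
  unfolding pd_def
  by (auto intro!: derivative_eq_intros simp: algebra_simps)

lemma pd_cmult: "pd f fu fv \<Longrightarrow> pd (\<lambda>z. c * f z) (\<lambda>z. c * fu z) (\<lambda>z. c * fv z)"
  for f :: "complex \<Rightarrow> complex"
  unfolding pd_def
  by (auto intro!: derivative_eq_intros simp: algebra_simps scaleR_conv_of_real)

lemma pd_of_real: "pd f fu fv \<Longrightarrow> pd (\<lambda>z. complex_of_real (f z)) (\<lambda>z. of_real (fu z)) (\<lambda>z. of_real (fv z))"
  unfolding pd_def
  by (auto intro!: derivative_eq_intros simp: algebra_simps scaleR_conv_of_real)

lemma pd_nth: "pd f fu fv \<Longrightarrow> pd (\<lambda>z. f z $ k) (\<lambda>z. fu z $ k) (\<lambda>z. fv z $ k)"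
  unfolding pd_def
proof
  fix z assume "\<forall>z. (f has_derivative (\<lambda>w. Re w *\<^sub>R fu z + Im w *\<^sub>R fv z)) (at z)"
  then have "((\<lambda>z. f z $ k) has_derivative (\<lambda>w. (Re w *\<^sub>R fu z + Im w *\<^sub>R fv z) $ k)) (at z)"
    by (intro bounded_linear.has_derivative[OF bounded_linear_vec_nth]) auto
  then show "((\<lambda>z. f z $ k) has_derivative (\<lambda>w. Re w *\<^sub>R fu z $ k + Im w *\<^sub>R fv z $ k)) (at z)"
    by simp
qed

lemma vec4_decomp: "vec4 (a::real) b c d = a *\<^sub>R vec4 1 0 0 0 + b *\<^sub>R vec4 0 1 0 0 + c *\<^sub>R vec4 0 0 1 0 + d *\<^sub>R vec4 0 0 0 1"
  unfolding vec4_def by (simp add: vec_eq_iff)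

lemma vec4_nth [simp]: "vec4 a b c d $ 1 = a" "vec4 a b c d $ 2 = b" "vec4 a b c d $ 3 = c" "vec4 a b c d $ 4 = d"
  unfolding vec4_def by simp_all

lemma vec4_lin: "r *\<^sub>R vec4 a b c d + s *\<^sub>R vec4 a' b' c' d' = vec4 (r*a+s*a') (r*b+s*b') (r*c+s*c') (r*d+s*d')"
  by (simp add: vec4_def vec_eq_iff)

lemma vec4_add4: "(a1::real) *\<^sub>R vec4 1 0 0 0 + a2 *\<^sub>R vec4 0 1 0 0 + a3 *\<^sub>R vec4 0 0 1 0 + a4 *\<^sub>R vec4 0 0 0 1 = vec4 a1 a2 a3 a4"
  by (simp add: vec4_def vec_eq_iff)

lemma pd_vec4:
  fixes f1 :: "complex \<Rightarrow> real"
  assumes "pd f1 a1 b1" "pd f2 a2 b2" "pd f3 a3 b3" "pd f4 a4 b4"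
  shows "pd (\<lambda>z. vec4 (f1 z) (f2 z) (f3 z) (f4 z)) (\<lambda>z. vec4 (a1 z) (a2 z) (a3 z) (a4 z)) (\<lambda>z. vec4 (b1 z) (b2 z) (b3 z) (b4 z))"
  unfolding pd_def
proof
  fix z
  have H: "\<And>f a b (e::real^4). pd f a b \<Longrightarrow> ((\<lambda>z. f z *\<^sub>R e) has_derivative (\<lambda>w. (Re w *\<^sub>R a z + Im w *\<^sub>R b z) *\<^sub>R e)) (at z)"
    unfolding pd_def by (intro bounded_linear.has_derivative[OF bounded_linear_scaleR_left]) auto
  have "((\<lambda>z. f1 z *\<^sub>R (vec4 1 0 0 0 :: real^4) + f2 z *\<^sub>R (vec4 0 1 0 0 :: real^4) + f3 z *\<^sub>R (vec4 0 0 1 0 :: real^4) + f4 z *\<^sub>R (vec4 0 0 0 1 :: real^4)) has_derivative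
     (\<lambda>w. (Re w *\<^sub>R a1 z + Im w *\<^sub>R b1 z) *\<^sub>R (vec4 1 0 0 0 :: real^4) + (Re w *\<^sub>R a2 z + Im w *\<^sub>R b2 z) *\<^sub>R (vec4 0 1 0 0 :: real^4)
       + (Re w *\<^sub>R a3 z + Im w *\<^sub>R b3 z) *\<^sub>R (vec4 0 0 1 0 :: real^4) + (Re w *\<^sub>R a4 z + Im w *\<^sub>R b4 z) *\<^sub>R (vec4 0 0 0 1 :: real^4))) (at z)"
    by (rule has_derivative_add[OF has_derivative_add[OF has_derivative_add[OF H[OF assms(1)] H[OF assms(2)]] H[OF assms(3)]] H[OF assms(4)]])
  then show "((\<lambda>z. vec4 (f1 z) (f2 z) (f3 z) (f4 z)) has_derivative
          (\<lambda>w. Re w *\<^sub>R vec4 (a1 z) (a2 z) (a3 z) (a4 z) + Im w *\<^sub>R vec4 (b1 z) (b2 z) (b3 z) (b4 z))) (at z)"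
    by (simp only: vec4_add4) (simp only: vec4_lin real_scaleR_def)
qed



lemma DERIV_sinh_real: "DERIV sinh (x::real) :> cosh x"
  using has_field_derivative_sinh[OF DERIV_ident] by simp
lemma DERIV_cosh_real: "DERIV cosh (x::real) :> sinh x"
  using has_field_derivative_cosh[OF DERIV_ident] by simp
lemmas has_derivative_sinh_r[derivative_intros] = DERIV_sinh_real[THEN DERIV_compose_FDERIV]
lemmas has_derivative_cosh_r[derivative_intros] = DERIV_cosh_real[THEN DERIV_compose_FDERIV]

definition "Mf c s z = c * sinh (Re z) * sin (Re z) - s * cos (Re z) * cos (Im z)"
definition "Mfu c s z = c * (cosh (Re z) * sin (Re z) + sinh (Re z) * cos (Re z)) + s * sin (Re z) * cos (Im z)"
definition "Mfv c s z = s * cos (Re z) * sin (Im z)"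
definition "Mfuu c s z = 2 * c * cosh (Re z) * cos (Re z) + s * cos (Re z) * cos (Im z)"
definition "Mfuv c s z = - (s * sin (Re z) * sin (Im z))"
definition "Mfvu c s z = - (s * sin (Re z) * sin (Im z))"
definition "Mfvv c s z = s * cos (Re z) * cos (Im z)"

lemma pd_Mf: "pd (Mf c s) (Mfu c s) (Mfv c s)"
  unfolding pd_def Mf_def Mfu_def Mfv_def
  by (auto intro!: derivative_eq_intros simp: fun_eq_iff algebra_simps)
lemma pd_Mfu: "pd (Mfu c s) (Mfuu c s) (Mfuv c s)"
  unfolding pd_def Mfu_def Mfuu_def Mfuv_def
  by (auto intro!: derivative_eq_intros simp: fun_eq_iff algebra_simps)
lemma pd_Mfv: "pd (Mfv c s) (Mfvu c s) (Mfvv c s)"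
  unfolding pd_def Mfv_def Mfvu_def Mfvv_def
  by (auto intro!: derivative_eq_intros simp: fun_eq_iff algebra_simps)
lemma cont_Mfuu: "continuous_on S (Mfuu c s)"
  unfolding Mfuu_def by (intro continuous_intros)
lemma cont_Mfuv: "continuous_on S (Mfuv c s)"
  unfolding Mfuv_def by (intro continuous_intros)
lemma cont_Mfvu: "continuous_on S (Mfvu c s)"
  unfolding Mfvu_def by (intro continuous_intros)
lemma cont_Mfvv: "continuous_on S (Mfvv c s)"
  unfolding Mfvv_def by (intro continuous_intros)

definition "Nf c s z = exp (Im z) * (c * cosh (Re z) + s * sin (Im z))"
definition "Nfu c s z = exp (Im z) * c * sinh (Re z)"
definition "Nfv c s z = exp (Im z) * (c * cosh (Re z) + s * sin (Im z) + s * cos (Im z))"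
definition "Nfuu c s z = exp (Im z) * c * cosh (Re z)"
definition "Nfuv c s z = exp (Im z) * c * sinh (Re z)"
definition "Nfvu c s z = exp (Im z) * c * sinh (Re z)"
definition "Nfvv c s z = exp (Im z) * (c * cosh (Re z) + 2 * s * cos (Im z))"

lemma pd_Nf: "pd (Nf c s) (Nfu c s) (Nfv c s)"
  unfolding pd_def Nf_def Nfu_def Nfv_def
  by (auto intro!: derivative_eq_intros simp: fun_eq_iff algebra_simps)
lemma pd_Nfu: "pd (Nfu c s) (Nfuu c s) (Nfuv c s)"
  unfolding pd_def Nfu_def Nfuu_def Nfuv_def
  by (auto intro!: derivative_eq_intros simp: fun_eq_iff algebra_simps)
lemma pd_Nfv: "pd (Nfv c s) (Nfvu c s) (Nfvv c s)"
  unfolding pd_def Nfv_def Nfvu_def Nfvv_def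
  by (auto intro!: derivative_eq_intros simp: fun_eq_iff algebra_simps)
lemma cont_Nfuu: "continuous_on S (Nfuu c s)"
  unfolding Nfuu_def by (intro continuous_intros)
lemma cont_Nfuv: "continuous_on S (Nfuv c s)"
  unfolding Nfuv_def by (intro continuous_intros)
lemma cont_Nfvu: "continuous_on S (Nfvu c s)"
  unfolding Nfvu_def by (intro continuous_intros)
lemma cont_Nfvv: "continuous_on S (Nfvv c s)"
  unfolding Nfvv_def by (intro continuous_intros)

definition "Xa c s z = c * sinh (Re z) * sin (Re z) - s * cos (Re z) * cos (Im z)"
definition "Xau c s z = c * (cosh (Re z) * sin (Re z) + sinh (Re z) * cos (Re z)) + s * sin (Re z) * cos (Im z)"
definition "Xav c s z = s * cos (Re z) * sin (Im z)"
definition "Xauu c s z = 2 * c * cosh (Re z) * cos (Re z) + s * cos (Re z) * cos (Im z)"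
definition "Xauv c s z = - (s * sin (Re z) * sin (Im z))"
definition "Xavu c s z = - (s * sin (Re z) * sin (Im z))"
definition "Xavv c s z = s * cos (Re z) * cos (Im z)"

lemma pd_Xa: "pd (Xa c s) (Xau c s) (Xav c s)"
  unfolding pd_def Xa_def Xau_def Xav_def
  by (auto intro!: derivative_eq_intros simp: fun_eq_iff algebra_simps)
lemma pd_Xau: "pd (Xau c s) (Xauu c s) (Xauv c s)"
  unfolding pd_def Xau_def Xauu_def Xauv_def
  by (auto intro!: derivative_eq_intros simp: fun_eq_iff algebra_simps)
lemma pd_Xav: "pd (Xav c s) (Xavu c s) (Xavv c s)"
  unfolding pd_def Xav_def Xavu_def Xavv_def
  by (auto intro!: derivative_eq_intros simp: fun_eq_iff algebra_simps)
lemma cont_Xauu: "continuous_on S (Xauu c s)"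
  unfolding Xauu_def by (intro continuous_intros)
lemma cont_Xauv: "continuous_on S (Xauv c s)"
  unfolding Xauv_def by (intro continuous_intros)
lemma cont_Xavu: "continuous_on S (Xavu c s)"
  unfolding Xavu_def by (intro continuous_intros)
lemma cont_Xavv: "continuous_on S (Xavv c s)"
  unfolding Xavv_def by (intro continuous_intros)

definition "Xb c s z = c * sinh (Re z) * cos (Re z) + s * sin (Re z) * cos (Im z)"
definition "Xbu c s z = c * (cosh (Re z) * cos (Re z) - sinh (Re z) * sin (Re z)) + s * cos (Re z) * cos (Im z)"
definition "Xbv c s z = - (s * sin (Re z) * sin (Im z))"
definition "Xbuu c s z = - (2 * c * cosh (Re z) * sin (Re z)) - s * sin (Re z) * cos (Im z)"
definition "Xbuv c s z = - (s * cos (Re z) * sin (Im z))"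
definition "Xbvu c s z = - (s * cos (Re z) * sin (Im z))"
definition "Xbvv c s z = - (s * sin (Re z) * cos (Im z))"

lemma pd_Xb: "pd (Xb c s) (Xbu c s) (Xbv c s)"
  unfolding pd_def Xb_def Xbu_def Xbv_def
  by (auto intro!: derivative_eq_intros simp: fun_eq_iff algebra_simps)
lemma pd_Xbu: "pd (Xbu c s) (Xbuu c s) (Xbuv c s)"
  unfolding pd_def Xbu_def Xbuu_def Xbuv_def
  by (auto intro!: derivative_eq_intros simp: fun_eq_iff algebra_simps)
lemma pd_Xbv: "pd (Xbv c s) (Xbvu c s) (Xbvv c s)"
  unfolding pd_def Xbv_def Xbvu_def Xbvv_def
  by (auto intro!: derivative_eq_intros simp: fun_eq_iff algebra_simps)
lemma cont_Xbuu: "continuous_on S (Xbuu c s)"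
  unfolding Xbuu_def by (intro continuous_intros)
lemma cont_Xbuv: "continuous_on S (Xbuv c s)"
  unfolding Xbuv_def by (intro continuous_intros)
lemma cont_Xbvu: "continuous_on S (Xbvu c s)"
  unfolding Xbvu_def by (intro continuous_intros)
lemma cont_Xbvv: "continuous_on S (Xbvv c s)"
  unfolding Xbvv_def by (intro continuous_intros)

definition "Xc c s z = c * cosh (Re z) * sinh (Im z) + s * cosh (Im z) * sin (Im z)"
definition "Xcu c s z = c * sinh (Re z) * sinh (Im z)"
definition "Xcv c s z = c * cosh (Re z) * cosh (Im z) + s * (sinh (Im z) * sin (Im z) + cosh (Im z) * cos (Im z))"
definition "Xcuu c s z = c * cosh (Re z) * sinh (Im z)"
definition "Xcuv c s z = c * sinh (Re z) * cosh (Im z)"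
definition "Xcvu c s z = c * sinh (Re z) * cosh (Im z)"
definition "Xcvv c s z = c * cosh (Re z) * sinh (Im z) + 2 * s * sinh (Im z) * cos (Im z)"

lemma pd_Xc: "pd (Xc c s) (Xcu c s) (Xcv c s)"
  unfolding pd_def Xc_def Xcu_def Xcv_def
  by (auto intro!: derivative_eq_intros simp: fun_eq_iff algebra_simps)
lemma pd_Xcu: "pd (Xcu c s) (Xcuu c s) (Xcuv c s)"
  unfolding pd_def Xcu_def Xcuu_def Xcuv_def
  by (auto intro!: derivative_eq_intros simp: fun_eq_iff algebra_simps)
lemma pd_Xcv: "pd (Xcv c s) (Xcvu c s) (Xcvv c s)"
  unfolding pd_def Xcv_def Xcvu_def Xcvv_def
  by (auto intro!: derivative_eq_intros simp: fun_eq_iff algebra_simps)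
lemma cont_Xcuu: "continuous_on S (Xcuu c s)"
  unfolding Xcuu_def by (intro continuous_intros)
lemma cont_Xcuv: "continuous_on S (Xcuv c s)"
  unfolding Xcuv_def by (intro continuous_intros)
lemma cont_Xcvu: "continuous_on S (Xcvu c s)"
  unfolding Xcvu_def by (intro continuous_intros)
lemma cont_Xcvv: "continuous_on S (Xcvv c s)"
  unfolding Xcvv_def by (intro continuous_intros)

definition "Xd c s z = c * cosh (Re z) * cosh (Im z) + s * sinh (Im z) * sin (Im z)"
definition "Xdu c s z = c * sinh (Re z) * cosh (Im z)"
definition "Xdv c s z = c * cosh (Re z) * sinh (Im z) + s * (cosh (Im z) * sin (Im z) + sinh (Im z) * cos (Im z))"
definition "Xduu c s z = c * cosh (Re z) * cosh (Im z)"
definition "Xduv c s z = c * sinh (Re z) * sinh (Im z)"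
definition "Xdvu c s z = c * sinh (Re z) * sinh (Im z)"
definition "Xdvv c s z = c * cosh (Re z) * cosh (Im z) + 2 * s * cosh (Im z) * cos (Im z)"

lemma pd_Xd: "pd (Xd c s) (Xdu c s) (Xdv c s)"
  unfolding pd_def Xd_def Xdu_def Xdv_def
  by (auto intro!: derivative_eq_intros simp: fun_eq_iff algebra_simps)
lemma pd_Xdu: "pd (Xdu c s) (Xduu c s) (Xduv c s)"
  unfolding pd_def Xdu_def Xduu_def Xduv_def
  by (auto intro!: derivative_eq_intros simp: fun_eq_iff algebra_simps)
lemma pd_Xdv: "pd (Xdv c s) (Xdvu c s) (Xdvv c s)"
  unfolding pd_def Xdv_def Xdvu_def Xdvv_def
  by (auto intro!: derivative_eq_intros simp: fun_eq_iff algebra_simps)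
lemma cont_Xduu: "continuous_on S (Xduu c s)"
  unfolding Xduu_def by (intro continuous_intros)
lemma cont_Xduv: "continuous_on S (Xduv c s)"
  unfolding Xduv_def by (intro continuous_intros)
lemma cont_Xdvu: "continuous_on S (Xdvu c s)"
  unfolding Xdvu_def by (intro continuous_intros)
lemma cont_Xdvv: "continuous_on S (Xdvv c s)"
  unfolding Xdvv_def by (intro continuous_intros)




lemma hfun_eq: "hfun z = of_real (exp (- Im z)) * (of_real (cos (Re z)) + \<i> * of_real (sin (Re z)))"
  by (simp add: hfun_def complex_eq_iff Re_exp Im_exp)

lemma facts_v: "exp (Im z) * exp (- Im z) = 1" "cosh (Im z) = (exp (Im z) + exp (- Im z)) / 2"
   "sinh (Im z) = (exp (Im z) - exp (- Im z)) / 2"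
  by (simp_all add: exp_minus field_simps cosh_def sinh_def)

lemma D2: "(of_real (Xbu c s z) - \<i> * of_real (Xbv c s z))/2 = (of_real (Mfu c s z) - \<i> * of_real (Mfv c s z))/2 * (-\<i>) + (of_real (Nfu c s z) - \<i> * of_real (Nfv c s z))/2 * (\<i> * hfun z)"
  unfolding hfun_eq
  apply (simp add: complex_eq_iff)
  unfolding Xbu_def Xbv_def Mfu_def Mfv_def Nfu_def Nfv_def
  using sin_cos_squared_add[of "Re z"] sin_cos_squared_add[of "Im z"] cosh_square_eq[of "Re z"] facts_v[of z]
  by algebra

lemma D3: "(of_real (Xcu c s z) - \<i> * of_real (Xcv c s z))/2 = (of_real (Mfu c s z) - \<i> * of_real (Mfv c s z))/2 * (- hfun z) + (of_real (Nfu c s z) - \<i> * of_real (Nfv c s z))/2 * ((1 + (hfun z)\<^sup>2) / 2)"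
  unfolding hfun_eq
  apply (simp add: complex_eq_iff power2_eq_square)
  unfolding Xcu_def Xcv_def Mfu_def Mfv_def Nfu_def Nfv_def
  using sin_cos_squared_add[of "Re z"] sin_cos_squared_add[of "Im z"] cosh_square_eq[of "Re z"] facts_v[of z]
  by algebra

lemma D4: "(of_real (Xdu c s z) - \<i> * of_real (Xdv c s z))/2 = (of_real (Mfu c s z) - \<i> * of_real (Mfv c s z))/2 * (hfun z) + (of_real (Nfu c s z) - \<i> * of_real (Nfv c s z))/2 * ((1 - (hfun z)\<^sup>2) / 2)"
  unfolding hfun_eq
  apply (simp add: complex_eq_iff power2_eq_square)
  unfolding Xdu_def Xdv_def Mfu_def Mfv_def Nfu_def Nfv_def
  using sin_cos_squared_add[of "Re z"] sin_cos_squared_add[of "Im z"] cosh_square_eq[of "Re z"] facts_v[of z]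
  by algebra



lemma I1: "(Xau c s z)\<^sup>2 + (Xbu c s z)\<^sup>2 + (Xcu c s z)\<^sup>2 - (Xdu c s z)\<^sup>2 = (c * cosh (Re z) + s * cos (Im z))\<^sup>2"
  unfolding Xau_def Xbu_def Xcu_def Xdu_def
  using sin_cos_squared_add[of "Re z"] sin_cos_squared_add[of "Im z"] cosh_square_eq[of "Re z"] cosh_square_eq[of "Im z"]
  by algebra

lemma I2: "(Xav c s z)\<^sup>2 + (Xbv c s z)\<^sup>2 + (Xcv c s z)\<^sup>2 - (Xdv c s z)\<^sup>2 = (c * cosh (Re z) + s * cos (Im z))\<^sup>2"
  unfolding Xav_def Xbv_def Xcv_def Xdv_def
  using sin_cos_squared_add[of "Re z"] sin_cos_squared_add[of "Im z"] cosh_square_eq[of "Re z"] cosh_square_eq[of "Im z"]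
  by algebra

lemma I3: "Xau c s z * Xav c s z + Xbu c s z * Xbv c s z + Xcu c s z * Xcv c s z - Xdu c s z * Xdv c s z = 0"
  unfolding Xau_def Xbu_def Xcu_def Xdu_def Xav_def Xbv_def Xcv_def Xdv_def
  using sin_cos_squared_add[of "Re z"] sin_cos_squared_add[of "Im z"] cosh_square_eq[of "Re z"] cosh_square_eq[of "Im z"]
  by algebra

lemma I4: "(Xa c s z)\<^sup>2 + (Xb c s z)\<^sup>2 + (Xc c s z)\<^sup>2 - (Xd c s z)\<^sup>2 = s\<^sup>2 - c\<^sup>2"
  unfolding Xa_def Xb_def Xc_def Xd_def
  using sin_cos_squared_add[of "Re z"] sin_cos_squared_add[of "Im z"] cosh_square_eq[of "Re z"] cosh_square_eq[of "Im z"]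
  by algebra

lemma LAP: "((complex_of_real (Mfuu c s z) + \<i> * of_real (Mfvu c s z)) - \<i> * (of_real (Mfuv c s z) + \<i> * of_real (Mfvv c s z))) / 4
   = of_real (Re (hfun z)) * (((complex_of_real (Nfuu c s z) + \<i> * of_real (Nfvu c s z)) - \<i> * (of_real (Nfuv c s z) + \<i> * of_real (Nfvv c s z))) / 4)"
  unfolding hfun_eq
  apply (simp add: complex_eq_iff)
  unfolding Mfuu_def Mfuv_def Mfvu_def Mfvv_def Nfuu_def Nfuv_def Nfvu_def Nfvv_def
  using facts_v[of z]
  by algebra

lemma NDeq: "(of_real (Mfu c s z) - \<i> * of_real (Mfv c s z))/2 - of_real (Re (hfun z)) * ((of_real (Nfu c s z) - \<i> * of_real (Nfv c s z))/2)
   = of_real ((c * cosh (Re z) + s * cos (Im z)) / 2) * (of_real (sin (Re z)) + \<i> * of_real (cos (Re z)))"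
  unfolding hfun_eq
  apply (simp add: complex_eq_iff)
  unfolding Mfu_def Mfv_def Nfu_def Nfv_def
  using facts_v[of z]
  by algebra

lemma ND: assumes "c * cosh (Re z) + s * cos (Im z) \<noteq> 0"
  shows "(of_real (Mfu c s z) - \<i> * of_real (Mfv c s z))/2 - of_real (Re (hfun z)) * ((of_real (Nfu c s z) - \<i> * of_real (Nfv c s z))/2) \<noteq> 0"
proof -
  have "complex_of_real (sin (Re z)) + \<i> * of_real (cos (Re z)) \<noteq> 0"
  proof
    assume "complex_of_real (sin (Re z)) + \<i> * of_real (cos (Re z)) = 0"
    then have "sin (Re z) = 0" "cos (Re z) = 0" by (simp_all add: complex_eq_iff)
    then show False using sin_cos_squared_add[of "Re z"] by simp
  qed
  moreover have "complex_of_real ((c * cosh (Re z) + s * cos (Im z)) / 2) \<noteq> 0"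
    using assms by (simp only: of_real_eq_0_iff) simp
  ultimately show ?thesis unfolding NDeq by (intro no_zero_divisors)
qed

definition "XF c s = (\<lambda>z. vec4 (Xa c s z) (Xb c s z) (Xc c s z) (Xd c s z))"
definition "XU c s = (\<lambda>z. vec4 (Xau c s z) (Xbu c s z) (Xcu c s z) (Xdu c s z))"
definition "XV c s = (\<lambda>z. vec4 (Xav c s z) (Xbv c s z) (Xcv c s z) (Xdv c s z))"
definition "XUU c s = (\<lambda>z. vec4 (Xauu c s z) (Xbuu c s z) (Xcuu c s z) (Xduu c s z))"
definition "XUV c s = (\<lambda>z. vec4 (Xauv c s z) (Xbuv c s z) (Xcuv c s z) (Xduv c s z))"
definition "XVU c s = (\<lambda>z. vec4 (Xavu c s z) (Xbvu c s z) (Xcvu c s z) (Xdvu c s z))"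
definition "XVV c s = (\<lambda>z. vec4 (Xavv c s z) (Xbvv c s z) (Xcvv c s z) (Xdvv c s z))"

lemma pd_XF: "pd (XF c s) (XU c s) (XV c s)"
  unfolding XF_def XU_def XV_def by (rule pd_vec4[OF pd_Xa pd_Xb pd_Xc pd_Xd])
lemma pd_XU: "pd (XU c s) (XUU c s) (XUV c s)"
  unfolding XUU_def XU_def XUV_def by (rule pd_vec4[OF pd_Xau pd_Xbu pd_Xcu pd_Xdu])
lemma pd_XV: "pd (XV c s) (XVU c s) (XVV c s)"
  unfolding XVV_def XV_def XVU_def by (rule pd_vec4[OF pd_Xav pd_Xbv pd_Xcv pd_Xdv])

lemma cont_vec4:
  fixes f1 :: "complex \<Rightarrow> real"
  assumes "continuous_on S f1" "continuous_on S f2" "continuous_on S f3" "continuous_on S f4"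
  shows "continuous_on S (\<lambda>z. vec4 (f1 z) (f2 z) (f3 z) (f4 z))"
proof -
  have "(\<lambda>z. vec4 (f1 z) (f2 z) (f3 z) (f4 z)) = (\<lambda>z. f1 z *\<^sub>R (vec4 1 0 0 0 :: real^4) + f2 z *\<^sub>R (vec4 0 1 0 0 :: real^4) + f3 z *\<^sub>R (vec4 0 0 1 0 :: real^4) + f4 z *\<^sub>R (vec4 0 0 0 1 :: real^4))"
    by (simp only: vec4_add4)
  then show ?thesis by (simp only:) (intro continuous_intros assms)
qed

lemma C2_XF: "C2_on S (XF c s)"
  apply (rule C2_pd[OF pd_XF pd_XU pd_XV])
  unfolding XUU_def XUV_def XVU_def XVV_def
  by (intro cont_vec4 cont_Xauu cont_Xbuu cont_Xcuu cont_Xduu cont_Xauv cont_Xbuv cont_Xcuv cont_Xduv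
     cont_Xavu cont_Xbvu cont_Xcvu cont_Xdvu cont_Xavv cont_Xbvv cont_Xcvv cont_Xdvv)+

lemma vec4_eq_iff: "vec4 a b c d = vec4 a' b' c' d' \<longleftrightarrow> a = a' \<and> b = b' \<and> c = c' \<and> d = d'"
  by (auto simp: vec_eq_iff forall_4)

lemma Xth_eq: "Xth \<theta> = XF (cos \<theta>) (sin \<theta>)"
  unfolding Xth_def X0_def Xpi2_def XF_def Xa_def Xb_def Xc_def Xd_def
  by (simp add: fun_eq_iff vec4_lin vec4_eq_iff algebra_simps)

lemma Mth_eq: "Mth \<theta> = Mf (cos \<theta>) (sin \<theta>)"
  by (simp add: fun_eq_iff Mth_def Mf_def)
lemma Nth_eq: "Nth \<theta> = Nf (cos \<theta>) (sin \<theta>)"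
  by (simp add: fun_eq_iff Nth_def Nf_def)

lemma pd_h: "pd hfun (\<lambda>z. \<i> * hfun z) (\<lambda>z. - hfun z)"
  unfolding pd_def
proof
  fix z
  have "(hfun has_field_derivative (\<i> * hfun z)) (at z)" unfolding hfun_def
    by (auto intro!: derivative_eq_intros)
  then have "(hfun has_derivative (*) (\<i> * hfun z)) (at z)"
    by (simp add: has_field_derivative_def)
  moreover have "(*) (\<i> * hfun z) = (\<lambda>w. Re w *\<^sub>R (\<i> * hfun z) + Im w *\<^sub>R (- hfun z))"
    by (auto simp: fun_eq_iff complex_eq_iff)
  ultimately show "(hfun has_derivative (\<lambda>w. Re w *\<^sub>R (\<i> * hfun z) + Im w *\<^sub>R (- hfun z))) (at z)"
    by simp
qed

lemma pd_h1: "pd (\<lambda>z. \<i> * hfun z) (\<lambda>z. \<i> * (\<i> * hfun z)) (\<lambda>z. \<i> * (- hfun z))"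
  by (rule pd_cmult[OF pd_h])
lemma pd_h2: "pd (\<lambda>z. - hfun z) (\<lambda>z. - (\<i> * hfun z)) (\<lambda>z. hfun z)"
  using pd_cmult[OF pd_h, of "-1"] by simp

lemma C2_h: "C2_on S hfun"
  by (rule C2_pd[OF pd_h pd_h1 pd_h2]) (unfold hfun_def, auto intro!: holomorphic_on_imp_continuous_on holomorphic_intros)

lemma dz_pd: "pd f fu fv \<Longrightarrow> dz f z = (fu z - \<i> * fv z) / 2"
  unfolding dz_def by (simp add: pu_pd pv_pd)
lemma dzb_pd: "pd f fu fv \<Longrightarrow> dzb f z = (fu z + \<i> * fv z) / 2"
  unfolding dzb_def by (simp add: pu_pd pv_pd)

lemma dz_dzb_pd:
  assumes "pd f fu fv" "pd fu fuu fuv" "pd fv fvu fvv"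
  shows "dz (dzb f) z = ((fuu z + \<i> * fvu z) - \<i> * (fuv z + \<i> * fvv z)) / 4"
proof -
  have e: "dzb f = (\<lambda>z. (1/2) * fu z + (\<i>/2) * fv z)"
    using dzb_pd[OF assms(1)] by (auto simp: fun_eq_iff field_simps)
  have "pd (dzb f) (\<lambda>z. (1/2) * fuu z + (\<i>/2) * fvu z) (\<lambda>z. (1/2) * fuv z + (\<i>/2) * fvv z)"
    unfolding e by (intro pd_add pd_cmult assms)
  then have "dz (dzb f) z = ((1/2) * fuu z + (\<i>/2) * fvu z - \<i> * ((1/2) * fuv z + (\<i>/2) * fvv z)) / 2"
    by (rule dz_pd)
  also have "\<dots> = ((fuu z + \<i> * fvu z) - \<i> * (fuv z + \<i> * fvv z)) / 4"
    by (simp add: field_simps)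
  finally show ?thesis .
qed



lemma D1: "(of_real (Xau c s z) - \<i> * of_real (Xav c s z))/2 = (of_real (Mfu c s z) - \<i> * of_real (Mfv c s z))/2 * 1 + (of_real (Nfu c s z) - \<i> * of_real (Nfv c s z))/2 * 0"
  by (simp add: Xau_def Mfu_def Xav_def Mfv_def)

lemma vec4_add: "vec4 a b c d + vec4 a' b' c' d' = vec4 (a+a') (b+b') (c+c') (d+d')"
  by (simp add: vec4_def vec_eq_iff)
lemma vec4_scale: "r *\<^sub>R vec4 a b c d = vec4 (r*a) (r*b) (r*c) (r*d)"
  by (simp add: vec4_def vec_eq_iff)

lemma lorentz_vec4: "lorentz (vec4 a b c d) (vec4 a' b' c' d') = a*a' + b*b' + c*c' - d*d'"
  by (simp add: lorentz_def)

lemma MCsum: "XUU c s z + XVV c s z = (2 * (c * cosh (Re z) + s * cos (Im z))) *\<^sub>R vec4 (cos (Re z)) (- sin (Re z)) (sinh (Im z)) (cosh (Im z))"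
  unfolding XUU_def XVV_def vec4_add vec4_scale vec4_eq_iff
    Xauu_def Xbuu_def Xcuu_def Xduu_def Xavv_def Xbvv_def Xcvv_def Xdvv_def
  by (simp add: algebra_simps)

theorem mainTheorem11:
  fixes \<theta> :: real and \<Omega> :: "complex set"
  assumes "0 \<le> \<theta>" "\<theta> \<le> pi / 2"
    and "open \<Omega>" "simply_connected \<Omega>"
    and "\<forall>z\<in>\<Omega>. cos \<theta> * cosh (Re z) + sin \<theta> * cos (Im z) \<noteq> 0"
  shows "weierstrass_data2 \<Omega> hfun (Mth \<theta>) (Nth \<theta>)
    \<and> (\<forall>z\<in>\<Omega>. dz_vec (Xth \<theta>) z
          = dz (\<lambda>w. complex_of_real (Mth \<theta> w)) z *s vec4 1 (- \<i>) (- hfun z) (hfun z)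
            + dz (\<lambda>w. complex_of_real (Nth \<theta> w)) z
                *s vec4 0 (\<i> * hfun z) ((1 + (hfun z)\<^sup>2) / 2) ((1 - (hfun z)\<^sup>2) / 2))
    \<and> conformal_spacelike_immersion \<Omega> (Xth \<theta>) (Lam \<theta>)
    \<and> (\<forall>z\<in>\<Omega>. lorentz (mean_curvature (Xth \<theta>) (Lam \<theta>) z) (mean_curvature (Xth \<theta>) (Lam \<theta>) z) = 0
              \<and> mean_curvature (Xth \<theta>) (Lam \<theta>) z \<noteq> 0)
    \<and> (\<forall>z\<in>\<Omega>. lorentz (Xth \<theta> z) (Xth \<theta> z) = - cos (2 * \<theta>))"
proof -
  define c s where "c = cos \<theta>" and "s = sin \<theta>"
  have L: "\<And>z. z \<in> \<Omega> \<Longrightarrow> c * cosh (Re z) + s * cos (Im z) \<noteq> 0"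
    using assms(5) c_def s_def by auto
  have XE: "Xth \<theta> = XF c s" using Xth_eq c_def s_def by simp
  have ME: "Mth \<theta> = Mf c s" using Mth_eq c_def s_def by simp
  have NE: "Nth \<theta> = Nf c s" using Nth_eq c_def s_def by simp
  have LamE: "\<And>z. Lam \<theta> z = (c * cosh (Re z) + s * cos (Im z))\<^sup>2" by (simp add: Lam_def c_def s_def)
  note pM = pd_of_real[OF pd_Mf[of c s]]
  note pMu = pd_of_real[OF pd_Mfu[of c s]]
  note pMv = pd_of_real[OF pd_Mfv[of c s]]
  note pN = pd_of_real[OF pd_Nf[of c s]]
  note pNu = pd_of_real[OF pd_Nfu[of c s]]
  note pNv = pd_of_real[OF pd_Nfv[of c s]]
  have P1: "weierstrass_data2 \<Omega> hfun (Mth \<theta>) (Nth \<theta>)"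
    unfolding weierstrass_data2_def ME NE
  proof (intro conjI ballI)
    fix z assume z: "z \<in> \<Omega>"
    show "hfun z \<noteq> 0" by (simp add: hfun_def)
    show "dzb hfun z = 0" by (simp add: dzb_pd[OF pd_h])
    show "dz (dzb (\<lambda>w. complex_of_real (Mf c s w))) z =
          complex_of_real (Re (hfun z)) * dz (dzb (\<lambda>w. complex_of_real (Nf c s w))) z"
      by (simp only: dz_dzb_pd[OF pM pMu pMv] dz_dzb_pd[OF pN pNu pNv] LAP)
    show "dz (\<lambda>w. complex_of_real (Mf c s w)) z -
          complex_of_real (Re (hfun z)) * dz (\<lambda>w. complex_of_real (Nf c s w)) z \<noteq> 0"
      by (simp only: dz_pd[OF pM] dz_pd[OF pN]) (rule ND[OF L[OF z]])
  next
    show "C2_on \<Omega> hfun" by (rule C2_h)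
    show "C2_on \<Omega> (Mf c s)"
      by (rule C2_pd[OF pd_Mf pd_Mfu pd_Mfv cont_Mfuu cont_Mfuv cont_Mfvu cont_Mfvv])
    show "C2_on \<Omega> (Nf c s)"
      by (rule C2_pd[OF pd_Nf pd_Nfu pd_Nfv cont_Nfuu cont_Nfuv cont_Nfvu cont_Nfvv])
  qed
  have P2: "\<forall>z\<in>\<Omega>. dz_vec (Xth \<theta>) z
          = dz (\<lambda>w. complex_of_real (Mth \<theta> w)) z *s vec4 1 (- \<i>) (- hfun z) (hfun z)
            + dz (\<lambda>w. complex_of_real (Nth \<theta> w)) z
                *s vec4 0 (\<i> * hfun z) ((1 + (hfun z)\<^sup>2) / 2) ((1 - (hfun z)\<^sup>2) / 2)"
  proof
    fix z
    have comp: "\<And>k. dz (\<lambda>w. complex_of_real (Xth \<theta> w $ k)) z = (of_real (XU c s z $ k) - \<i> * of_real (XV c s z $ k))/2"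
      unfolding XE by (rule dz_pd[OF pd_of_real[OF pd_nth[OF pd_XF]]])
    show "dz_vec (Xth \<theta>) z
          = dz (\<lambda>w. complex_of_real (Mth \<theta> w)) z *s vec4 1 (- \<i>) (- hfun z) (hfun z)
            + dz (\<lambda>w. complex_of_real (Nth \<theta> w)) z
                *s vec4 0 (\<i> * hfun z) ((1 + (hfun z)\<^sup>2) / 2) ((1 - (hfun z)\<^sup>2) / 2)"
      unfolding vec_eq_iff forall_4 dz_vec_def vec_lambda_beta vector_add_component vector_smult_component
        comp ME NE dz_pd[OF pM] dz_pd[OF pN] XU_def XV_def vec4_nth
      using D1 D2 D3 D4 by blast
  qed
  have P3: "conformal_spacelike_immersion \<Omega> (Xth \<theta>) (Lam \<theta>)"
    unfolding conformal_spacelike_immersion_def XE pu_pd[OF pd_XF] pv_pd[OF pd_XF]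
  proof (intro conjI ballI)
    fix z assume z: "z \<in> \<Omega>"
    show "XF c s differentiable at z" by (rule pd_diff[OF pd_XF])
    show "0 < Lam \<theta> z" unfolding LamE using L[OF z] by simp
    show "lorentz (XU c s z) (XU c s z) = Lam \<theta> z"
      unfolding LamE XU_def lorentz_vec4 I1[symmetric] by (simp add: power2_eq_square)
    show "lorentz (XV c s z) (XV c s z) = Lam \<theta> z"
      unfolding LamE XV_def lorentz_vec4 I2[symmetric] by (simp add: power2_eq_square)
    show "lorentz (XU c s z) (XV c s z) = 0"
      unfolding XU_def XV_def lorentz_vec4 using I3 by simp
  next
    show "C2_on \<Omega> (XF c s)" by (rule C2_XF)
  qed
  have P4: "\<forall>z\<in>\<Omega>. lorentz (mean_curvature (Xth \<theta>) (Lam \<theta>) z) (mean_curvature (Xth \<theta>) (Lam \<theta>) z) = 0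
              \<and> mean_curvature (Xth \<theta>) (Lam \<theta>) z \<noteq> 0"
  proof
    fix z assume z: "z \<in> \<Omega>"
    define l where "l = c * cosh (Re z) + s * cos (Im z)"
    have l: "l \<noteq> 0" using L[OF z] l_def by simp
    have MC: "mean_curvature (Xth \<theta>) (Lam \<theta>) z = vec4 ((1/l\<^sup>2) * (2*l) * cos (Re z)) ((1/l\<^sup>2) * (2*l) * - sin (Re z))
         ((1/l\<^sup>2) * (2*l) * sinh (Im z)) ((1/l\<^sup>2) * (2*l) * cosh (Im z))"
      unfolding mean_curvature_def XE pu_pd[OF pd_XF] pv_pd[OF pd_XF] pu_pd[OF pd_XU] pv_pd[OF pd_XV]
        MCsum LamE l_def[symmetric] vec4_scale scaleR_scaleR by (simp add: mult.assoc)
    show "lorentz (mean_curvature (Xth \<theta>) (Lam \<theta>) z) (mean_curvature (Xth \<theta>) (Lam \<theta>) z) = 0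
              \<and> mean_curvature (Xth \<theta>) (Lam \<theta>) z \<noteq> 0"
    proof
      show "lorentz (mean_curvature (Xth \<theta>) (Lam \<theta>) z) (mean_curvature (Xth \<theta>) (Lam \<theta>) z) = 0"
        unfolding MC lorentz_vec4
        using sin_cos_squared_add[of "Re z"] cosh_square_eq[of "Im z"] by algebra
      have "(1/l\<^sup>2) * (2*l) * cosh (Im z) \<noteq> 0" using l by (simp add: cosh_real_pos[THEN less_imp_neq, symmetric])
      then show "mean_curvature (Xth \<theta>) (Lam \<theta>) z \<noteq> 0"
        unfolding MC by (auto simp: vec4_eq_iff vec_eq_iff forall_4)
    qed
  qed
  have P5: "\<forall>z\<in>\<Omega>. lorentz (Xth \<theta> z) (Xth \<theta> z) = - cos (2 * \<theta>)"
  proof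
    fix z
    show "lorentz (Xth \<theta> z) (Xth \<theta> z) = - cos (2 * \<theta>)"
      unfolding XE XF_def lorentz_vec4 cos_double c_def[symmetric] s_def[symmetric]
      using I4[of c s z] by (simp add: power2_eq_square)
  qed
  show ?thesis using P1 P2 P3 P4 P5 by blast
qed

end
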